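(* For every odd integer $m\geq 3$, the edge set of $C_m[4]$ cannot be partitioned into one $C_4$-factor and three $C_m$-factors.
   Context: For a graph $G$ and a positive integer $k$, $G[k]$ is the graph with vertex set $V(G)\times\{0,1,\dots,k-1\}$ in which $(u,i)$ and $(w,j)$ are adjacent if and only if $uw\in E(G)$. $C_m$ is the cycle of length $m$. A $C_k$-factor of a graph is a spanning subgraph each of whose components is a cycle of length $k$. *)

theory Defs
  imports Main
begin

definition cycle_graph_edges :: "nat \<Rightarrow> nat set set" where
  "cycle_graph_edges m = {{i, (i + 1) mod m} | i. i < m}"

definition cycle_graph_verts :: "nat \<Rightarrow> nat set" where
  "cycle_graph_verts m = {0..<m}"

definition blowup_verts :: "'a set \<Rightarrow> nat \<Rightarrow> ('a \<times> nat) set" where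
  "blowup_verts V k = V \<times> {0..<k}"

definition blowup_edges :: "'a set set \<Rightarrow> nat \<Rightarrow> ('a \<times> nat) set set" where
  "blowup_edges E k = {{(u, i), (w, j)} | u w i j. {u, w} \<in> E \<and> i < k \<and> j < k}"

definition cycle_edges :: "'a list \<Rightarrow> 'a set set" where
  "cycle_edges vs = {{vs ! i, vs ! ((i + 1) mod length vs)} | i. i < length vs}"

text \<open>F is (the edge set of) a C_k-factor of the graph (V,E): F is a set of edges of E
  such that the spanning subgraph (V,F) has all components cycles of length k.\<close>
definition is_cycle_factor :: "'a set \<Rightarrow> 'a set set \<Rightarrow> nat \<Rightarrow> 'a set set \<Rightarrow> bool" where
  "is_cycle_factor V E k F \<longleftrightarrow>
     F \<subseteq> E \<and>
     (\<exists>P. \<Union>P = V \<and>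
          (\<forall>X\<in>P. \<forall>Y\<in>P. X \<noteq> Y \<longrightarrow> X \<inter> Y = {}) \<and>
          (\<forall>e\<in>F. \<exists>X\<in>P. e \<subseteq> X) \<and>
          (\<forall>X\<in>P. \<exists>vs. 3 \<le> k \<and> length vs = k \<and> distinct vs \<and> set vs = X \<and>
                       {e\<in>F. e \<subseteq> X} = cycle_edges vs))"

end

theory Submission
  imports Defs
begin

definition Vb :: "nat \<Rightarrow> (nat\<times>nat) set" where "Vb m = blowup_verts (cycle_graph_verts m) 4"
definition Eb :: "nat \<Rightarrow> (nat\<times>nat) set set" where "Eb m = blowup_edges (cycle_graph_edges m) 4"

lemma Vb_eq: "Vb m = {0..<m} \<times> {0..<4}"
  by (simp add: Vb_def blowup_verts_def cycle_graph_verts_def)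

lemma edge_iff: "3 \<le> m \<Longrightarrow> {v,w} \<in> Eb m \<longleftrightarrow> v \<in> Vb m \<and> w \<in> Vb m \<and>
   (fst w = (fst v+1) mod m \<or> fst v = (fst w+1) mod m)"
proof
  assume "{v,w} \<in> Eb m" "3 \<le> m"
  then obtain u w' i j k where h: "{v,w} = {(u,i),(w',j)}" "{u,w'} = {k,(k+1) mod m}" "k<m" "i<4" "j<4"
    unfolding Eb_def blowup_edges_def cycle_graph_edges_def by blast
  then show "v \<in> Vb m \<and> w \<in> Vb m \<and> (fst w = (fst v+1) mod m \<or> fst v = (fst w+1) mod m)"
    unfolding Vb_eq by (auto simp: doubleton_eq_iff)
next
  assume a: "v \<in> Vb m \<and> w \<in> Vb m \<and> (fst w = (fst v+1) mod m \<or> fst v = (fst w+1) mod m)" "3 \<le> m"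
  obtain u i where v: "v = (u,i)" by fastforce
  obtain u' j where w: "w = (u',j)" by fastforce
  from a v w have "u < m" "u' < m" "i < 4" "j < 4" by (auto simp: Vb_eq)
  show "{v,w} \<in> Eb m"
  proof (cases "u' = (u+1) mod m")
    case True
    then have "{u,u'} = {u,(u+1) mod m} \<and> u < m" using \<open>u<m\<close> by simp
    then show ?thesis unfolding Eb_def blowup_edges_def cycle_graph_edges_def
      using v w \<open>i<4\<close> \<open>j<4\<close> by blast
  next
    case False
    then have "u = (u'+1) mod m" using a v w by auto
    then have "{u,u'} = {u',(u'+1) mod m} \<and> u' < m" using \<open>u'<m\<close> by auto
    then show ?thesis unfolding Eb_def blowup_edges_def cycle_graph_edges_def
      using v w \<open>i<4\<close> \<open>j<4\<close> by blast
  qed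
qed

lemma back_iff: "a < m \<Longrightarrow> b < (m::nat) \<Longrightarrow> (a = (b+1) mod m) \<longleftrightarrow> (b = (a + (m-1)) mod m)"
  by (cases "b+1 < m"; cases "a = 0") (auto simp: mod_if)
lemma fwd_ne_bwd: "3 \<le> (m::nat) \<Longrightarrow> a < m \<Longrightarrow> (a+1) mod m \<noteq> (a+(m-1)) mod m"
  by (cases "a+1 < m"; cases "a = 0") (auto simp: mod_if)
lemma sum_rot: "0 < (n::nat) \<Longrightarrow> (\<Sum>k<n. g ((k+1) mod n)) = (\<Sum>k<n. (g k :: int))"
proof -
  assume "0 < n"
  then obtain p where n: "n = Suc p" using gr0_implies_Suc by blast
  have "(\<Sum>k<Suc p. g ((k+1) mod Suc p)) = (\<Sum>k<p. g ((k+1) mod Suc p)) + g 0"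
    by (simp add: sum.lessThan_Suc)
  also have "(\<Sum>k<p. g ((k+1) mod Suc p)) = (\<Sum>k<p. g (Suc k))"
    by (rule sum.cong) auto
  also have "\<dots> + g 0 = (\<Sum>k<Suc p. g k)"
    by (subst sum.lessThan_Suc_shift) simp
  finally show ?thesis using n by simp
qed

lemma walk_count:
  fixes L :: "nat \<Rightarrow> nat" and n m :: nat and P :: "nat \<Rightarrow> bool"
  assumes n: "0 < n" and m: "3 \<le> m"
    and st: "\<And>k. k < n \<Longrightarrow> L ((k+1) mod n) = (L k + (if P k then 1 else m - 1)) mod m"
  shows "int m dvd 2 * int (card {k\<in>{..<n}. P k}) - int n"
proof -
  define d where "d k = (if P k then 1 else m - 1)" for k
  have each: "int m dvd int (L k) + int (d k) - int (L ((k+1) mod n))" if "k < n" for k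
  proof -
    have "L ((k+1) mod n) = (L k + d k) mod m" using st[OF that] by (simp add: d_def)
    then have "int (L ((k+1) mod n)) = (int (L k) + int (d k)) mod int m"
      by (simp add: zmod_int)
    then show ?thesis by (simp add: mod_eq_dvd_iff[symmetric] mod_diff_left_eq[symmetric])
  qed
  have "int m dvd (\<Sum>k<n. int (L k) + int (d k) - int (L ((k+1) mod n)))"
    by (rule dvd_sum) (use each in auto)
  also have "(\<Sum>k<n. int (L k) + int (d k) - int (L ((k+1) mod n))) = (\<Sum>k<n. int (d k))"
    using sum_rot[OF n, of "\<lambda>k. int (L k)"] by (simp add: sum.distrib sum_subtractf)
  finally have D: "int m dvd (\<Sum>k<n. int (d k))" .
  let ?A = "{k. k < n \<and> P k}" and ?B = "{k. k < n \<and> \<not> P k}"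
  have "(\<Sum>k<n. int (d k)) = (\<Sum>k\<in>?A. int (d k)) + (\<Sum>k\<in>?B. int (d k))"
  proof -
    have U: "{..<n} = ?A \<union> ?B" by auto
    have "(\<Sum>k\<in>?A \<union> ?B. int (d k)) = (\<Sum>k\<in>?A. int (d k)) + (\<Sum>k\<in>?B. int (d k))"
      by (rule sum.union_disjoint) auto
    then show ?thesis using U by simp
  qed
  also have "\<dots> = int (card ?A) + int (card ?B) * (int m - 1)"
    using m by (simp add: d_def of_nat_diff)
  finally have S: "(\<Sum>k<n. int (d k)) = int (card ?A) + int (card ?B) * (int m - 1)" .
  have "card ?A + card ?B = n"
  proof -
    have "card ?A + card ?B = card (?A \<union> ?B)" by (rule card_Un_disjoint[symmetric]) auto
    also have "?A \<union> ?B = {..<n}" by auto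
    finally show ?thesis by simp
  qed
  then have "(\<Sum>k<n. int (d k)) = int m * int (card ?B) - (int n - 2 * int (card ?A))"
    using S by (simp add: algebra_simps)
  note E = this
  have X: "int n - 2 * int (card ?A) = int m * int (card ?B) - (\<Sum>k<n. int (d k))"
    using E by simp
  have "int m dvd int m * int (card ?B) - (\<Sum>k<n. int (d k))"
    by (rule dvd_diff[OF dvd_triv_left D])
  then have "int m dvd int n - 2 * int (card ?A)" using X by simp
  then have "int m dvd - (int n - 2 * int (card ?A))" by (simp only: dvd_minus_iff)
  then have "int m dvd 2 * int (card ?A) - int n" by simp
  moreover have "{k\<in>{..<n}. P k} = ?A" by auto
  ultimately show ?thesis by simp
qed
lemma factor_cycle:
  assumes F: "is_cycle_factor V E k F" and v: "v \<in> V"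
  shows "\<exists>vs i. length vs = k \<and> distinct vs \<and> set vs \<subseteq> V \<and> i < k \<and> vs ! i = v \<and>
     cycle_edges vs \<subseteq> F \<and> 3 \<le> k \<and>
     (\<forall>w. {v,w} \<in> F \<longleftrightarrow> w = vs ! ((i+1) mod k) \<or> w = vs ! ((i+(k-1)) mod k))"
proof -
  obtain P where P: "\<Union>P = V" "\<forall>X\<in>P. \<forall>Y\<in>P. X \<noteq> Y \<longrightarrow> X \<inter> Y = {}"
     "\<forall>e\<in>F. \<exists>X\<in>P. e \<subseteq> X"
     "\<forall>X\<in>P. \<exists>vs. 3 \<le> k \<and> length vs = k \<and> distinct vs \<and> set vs = X \<and>
                       {e\<in>F. e \<subseteq> X} = cycle_edges vs"
    using F unfolding is_cycle_factor_def by blast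
  from v P(1) obtain X where X: "X \<in> P" "v \<in> X" by blast
  have "\<exists>vs. 3 \<le> k \<and> length vs = k \<and> distinct vs \<and> set vs = X \<and>
                       {e\<in>F. e \<subseteq> X} = cycle_edges vs" using P(4) X(1) by (rule bspec)
  then obtain vs where vs: "3 \<le> k" "length vs = k" "distinct vs" "set vs = X"
     "{e\<in>F. e \<subseteq> X} = cycle_edges vs" by (elim exE conjE) simp
  from vs X obtain i where i: "i < k" "vs ! i = v" by (metis in_set_conv_nth)
  have XV: "X \<subseteq> V" using X P(1) by blast
  have CF: "cycle_edges vs \<subseteq> F" using vs(5) by blast
  have "{v,w} \<in> F \<longleftrightarrow> w = vs ! ((i+1) mod k) \<or> w = vs ! ((i+(k-1)) mod k)" for w
  proof
    assume e: "{v,w} \<in> F"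
    then obtain Y where Y: "Y \<in> P" "{v,w} \<subseteq> Y" using P(3) by blast
    have "Y = X" using P(2) X Y by blast
    then have "{v,w} \<in> cycle_edges vs" using vs(5) e Y by blast
    then obtain j where j: "j < k" "{v,w} = {vs ! j, vs ! ((j+1) mod k)}"
      unfolding cycle_edges_def using vs(2) by blast
    have jk: "(j+1) mod k < k" using j(1) by simp
    show "w = vs ! ((i+1) mod k) \<or> w = vs ! ((i+(k-1)) mod k)"
    proof (cases "v = vs ! j")
      case True
      then have "j = i" using i vs(2,3) j(1) nth_eq_iff_index_eq by metis
      then show ?thesis using j True vs(2,3) by (auto simp: doubleton_eq_iff)
    next
      case False
      then have vv: "v = vs ! ((j+1) mod k)" "w = vs ! j" using j(2) by (auto simp: doubleton_eq_iff)
      then have "(j+1) mod k = i" using i vs(2,3) jk nth_eq_iff_index_eq by metis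
      then have "j = (i + (k-1)) mod k" using j(1) vs(1)
        by (cases "j+1 < k") (auto simp: mod_if)
      then show ?thesis using vv by simp
    qed
  next
    assume "w = vs ! ((i+1) mod k) \<or> w = vs ! ((i+(k-1)) mod k)"
    then show "{v,w} \<in> F"
    proof
      assume w: "w = vs ! ((i+1) mod k)"
      have "{vs ! i, vs ! ((i+1) mod k)} \<in> cycle_edges vs"
        unfolding cycle_edges_def using i vs(2) by blast
      then show ?thesis using CF w i by auto
    next
      assume w: "w = vs ! ((i+(k-1)) mod k)"
      define j where "j = (i+(k-1)) mod k"
      have jk: "j < k" using vs(1) by (simp add: j_def)
      have "(j+1) mod k = i" using i(1) vs(1) unfolding j_def
        by (cases "i = 0") (auto simp: mod_if)
      then have "{vs ! j, vs ! i} \<in> cycle_edges vs"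
        unfolding cycle_edges_def using jk vs(2) by (metis (mono_tags, lifting) mem_Collect_eq)
      then show ?thesis using CF w i by (auto simp: j_def insert_commute)
    qed
  qed
  then show ?thesis using vs i XV CF X by blast
qed

definition Nb :: "nat \<Rightarrow> (nat\<times>nat) set set \<Rightarrow> nat \<Rightarrow> nat\<times>nat \<Rightarrow> (nat\<times>nat) set" where
  "Nb m F d v = {w. {v,w} \<in> F \<and> fst w = (fst v + d) mod m}"

lemma adj_layers:
  assumes m: "3 \<le> m" and F: "F \<subseteq> Eb m" and C: "cycle_edges vs \<subseteq> F" and l: "length vs = k"
    and j: "j < k"
  shows "fst (vs!((j+1) mod k)) = (fst (vs!j)+1) mod m \<or>
         fst (vs!((j+1) mod k)) = (fst (vs!j)+(m-1)) mod m"
    and "fst (vs ! j) < m"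
proof -
  have "{vs!j, vs!((j+1) mod k)} \<in> cycle_edges vs"
    unfolding cycle_edges_def using j l by blast
  then have E: "{vs!j, vs!((j+1) mod k)} \<in> Eb m" using C F by blast
  then have h: "vs!j \<in> Vb m" "vs!((j+1) mod k) \<in> Vb m"
    "fst (vs!((j+1) mod k)) = (fst (vs!j)+1) mod m \<or> fst (vs!j) = (fst (vs!((j+1) mod k))+1) mod m"
    using edge_iff[OF m] by blast+
  have lt: "fst (vs!j) < m" "fst (vs!((j+1) mod k)) < m" using h(1,2) by (auto simp: Vb_eq)
  then show "fst (vs ! j) < m" by simp
  show "fst (vs!((j+1) mod k)) = (fst (vs!j)+1) mod m \<or>
         fst (vs!((j+1) mod k)) = (fst (vs!j)+(m-1)) mod m"
    using h(3) back_iff[OF lt] by blast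
qed

lemma NE_eq:
  assumes m: "3 \<le> m" and v: "v \<in> Vb m" and d: "d = 1 \<or> d = m - 1"
  shows "Nb m (Eb m) d v = (\<lambda>j. ((fst v + d) mod m, j)) ` {0..<4}"
proof -
  have fv: "fst v < m" using v by (auto simp: Vb_eq)
  have "w \<in> Nb m (Eb m) d v \<longleftrightarrow> w \<in> (\<lambda>j. ((fst v + d) mod m, j)) ` {0..<4}" for w
  proof
    assume "w \<in> Nb m (Eb m) d v"
    then have "{v,w} \<in> Eb m" "fst w = (fst v + d) mod m" by (auto simp: Nb_def)
    then have "w \<in> Vb m" "fst w = (fst v + d) mod m" using edge_iff[OF m] by blast+
    then show "w \<in> (\<lambda>j. ((fst v + d) mod m, j)) ` {0..<4}"
      by (auto simp: Vb_eq image_iff intro: exI[of _ "snd w"])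
  next
    assume "w \<in> (\<lambda>j. ((fst v + d) mod m, j)) ` {0..<4}"
    then obtain j where w: "w = ((fst v + d) mod m, j)" "j < 4" by auto
    have wv: "w \<in> Vb m" using w m by (auto simp: Vb_eq)
    have fw: "fst w < m" using w m by simp
    have "fst w = (fst v+1) mod m \<or> fst v = (fst w+1) mod m"
      using d back_iff[OF fv fw] w by auto
    then have "{v,w} \<in> Eb m" using edge_iff[OF m] v wv by blast
    then show "w \<in> Nb m (Eb m) d v" using w by (simp add: Nb_def)
  qed
  then show ?thesis by blast
qed

lemma NE_card:
  assumes m: "3 \<le> m" and v: "v \<in> Vb m" and d: "d = 1 \<or> d = m - 1"
  shows "card (Nb m (Eb m) d v) = 4" "finite (Nb m (Eb m) d v)"
proof -
  have "inj_on (\<lambda>j. ((fst v + d) mod m, j)) {0..<4::nat}" by (auto simp: inj_on_def)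
  then show "card (Nb m (Eb m) d v) = 4" using NE_eq[OF assms] by (simp add: card_image)
  show "finite (Nb m (Eb m) d v)" using NE_eq[OF assms] by simp
qed

lemma two_card:
  assumes "fst w1 = x" "fst w2 = y" "x \<noteq> y" "c = x \<or> c = y"
  shows "card {w. (w = w1 \<or> w = w2) \<and> fst w = c} = 1"
proof -
  have "{w. (w = w1 \<or> w = w2) \<and> fst w = c} = (if c = x then {w1} else {w2})"
    using assms by auto
  then show ?thesis by simp
qed

lemma Ncm_card:
  assumes odd: "odd m" and m: "3 \<le> m" and F: "is_cycle_factor (Vb m) (Eb m) m F"
    and v: "v \<in> Vb m" and d: "d = 1 \<or> d = m - 1"
  shows "card (Nb m F d v) = 1"
proof -
  obtain vs i where vs: "length vs = m" "distinct vs" "set vs \<subseteq> Vb m" "i < m" "vs ! i = v"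
     "cycle_edges vs \<subseteq> F"
     and nb: "\<And>w. {v,w} \<in> F \<longleftrightarrow> w = vs ! ((i+1) mod m) \<or> w = vs ! ((i+(m-1)) mod m)"
    using factor_cycle[OF F v] by blast
  have FE: "F \<subseteq> Eb m" using F by (simp add: is_cycle_factor_def)
  define P where "P j = (fst (vs!((j+1) mod m)) = (fst (vs!j)+1) mod m)" for j
  have st: "fst (vs!((j+1) mod m)) = (fst (vs!j) + (if P j then 1 else m - 1)) mod m" if "j < m" for j
    using adj_layers(1)[OF m FE vs(6) vs(1) that] by (auto simp: P_def)
  have W: "int m dvd 2 * int (card {k\<in>{..<m}. P k}) - int m"
    by (rule walk_count[where L="\<lambda>j. fst (vs!j)", OF _ m st]) (use m in auto)
  have "int m dvd 2 * int (card {k\<in>{..<m}. P k})"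
    using dvd_add[OF W dvd_refl[of "int m"]] by simp
  then have "int m dvd int (card {k\<in>{..<m}. P k})"
    using odd by (metis coprime_dvd_mult_right_iff coprime_int_iff even_numeral odd_even_add
       coprime_commute odd_one dvd_mult_cancel1 coprime_right_2_iff_odd of_nat_numeral)
  then have dv: "m dvd card {k\<in>{..<m}. P k}" by simp
  have le: "card {k\<in>{..<m}. P k} \<le> m"
    by (metis (no_types, lifting) card_lessThan card_mono finite_lessThan mem_Collect_eq subsetI lessThan_iff)
  have "card {k\<in>{..<m}. P k} = 0 \<or> card {k\<in>{..<m}. P k} = m"
    using dv le by (metis dvd_imp_le le_antisym neq0_conv)
  then have all: "(\<forall>j<m. P j) \<or> (\<forall>j<m. \<not> P j)"
  proof
    assume "card {k\<in>{..<m}. P k} = 0"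
    then have "{k\<in>{..<m}. P k} = {}" by simp
    then show ?thesis by auto
  next
    assume c: "card {k\<in>{..<m}. P k} = m"
    have "{k\<in>{..<m}. P k} = {..<m}"
      by (rule card_subset_eq) (use c in auto)
    then show ?thesis by blast
  qed
  define j' where "j' = (i+(m-1)) mod m"
  have j': "j' < m" "(j'+1) mod m = i" using vs(4) m unfolding j'_def
    by (auto, cases "i = 0") (auto simp: mod_if)
  have fv: "fst v < m" using v by (auto simp: Vb_eq)
  have f1: "fst (vs!((i+1) mod m)) < m" "fst (vs!j') < m"
    using adj_layers(2)[OF m FE vs(6) vs(1), of j'] adj_layers(2)[OF m FE vs(6) vs(1), of "(i+1) mod m"]
      j'(1) vs(4) m by simp_all
  have stj: "fst v = (fst (vs!j') + (if P j' then 1 else m - 1)) mod m"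
    using st[OF j'(1)] j'(2) vs(5) by simp
  have sti: "fst (vs!((i+1) mod m)) = (fst v + (if P i then 1 else m - 1)) mod m"
    using st[OF vs(4)] vs(5) by simp
  have ne: "(fst v + 1) mod m \<noteq> (fst v + (m-1)) mod m" using fwd_ne_bwd[OF m fv] .
  have dd: "(fst v + d) mod m = (fst v + 1) mod m \<or> (fst v + d) mod m = (fst v + (m-1)) mod m"
    using d by auto
  have "card {w. (w = vs ! ((i+1) mod m) \<or> w = vs ! j') \<and> fst w = (fst v + d) mod m} = 1"
    using all
  proof
    assume A: "\<forall>j<m. P j"
    then have "P i" "P j'" using vs(4) j'(1) by auto
    then have h1: "fst (vs!((i+1) mod m)) = (fst v + 1) mod m" and "fst v = (fst (vs!j') + 1) mod m"
      using sti stj by auto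
    then have h2: "fst (vs!j') = (fst v + (m-1)) mod m" using back_iff[OF fv f1(2)] by simp
    show ?thesis by (rule two_card[OF h1 h2 ne dd])
  next
    assume A: "\<forall>j<m. \<not> P j"
    then have "\<not> P i" "\<not> P j'" using vs(4) j'(1) by auto
    then have h1: "fst (vs!((i+1) mod m)) = (fst v + (m-1)) mod m" and "fst v = (fst (vs!j') + (m-1)) mod m"
      using sti stj by auto
    then have h2: "fst (vs!j') = (fst v + 1) mod m" using back_iff[OF f1(2) fv] by simp
    have "card {w. (w = vs ! j' \<or> w = vs ! ((i+1) mod m)) \<and> fst w = (fst v + d) mod m} = 1"
      by (rule two_card[OF h2 h1 ne dd])
    then show ?thesis by (simp add: disj_commute)
  qed
  moreover have "Nb m F d v = {w. (w = vs ! ((i+1) mod m) \<or> w = vs ! j') \<and> fst w = (fst v + d) mod m}"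
    unfolding Nb_def nb j'_def by simp
  ultimately show ?thesis by simp
qed


lemma card1_eq: "card S = 1 \<Longrightarrow> a \<in> S \<Longrightarrow> b \<in> S \<Longrightarrow> a = b"
  by (metis card_1_singletonE singletonD)

lemma main_aux:
  assumes odd: "odd m" and m: "3 \<le> m"
    and F0: "is_cycle_factor (Vb m) (Eb m) 4 F0"
    and F1: "is_cycle_factor (Vb m) (Eb m) m F1"
    and F2: "is_cycle_factor (Vb m) (Eb m) m F2"
    and F3: "is_cycle_factor (Vb m) (Eb m) m F3"
    and D: "F0 \<inter> F1 = {}" "F0 \<inter> F2 = {}" "F0 \<inter> F3 = {}"
       "F1 \<inter> F2 = {}" "F1 \<inter> F3 = {}" "F2 \<inter> F3 = {}"
    and U: "F0 \<union> F1 \<union> F2 \<union> F3 = Eb m"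
  shows False
proof -
  have c0: "card (Nb m F0 d v) = 1" if v: "v \<in> Vb m" and d: "d = 1 \<or> d = m - 1" for v d
  proof -
    let ?N = "\<lambda>F. Nb m F d v"
    have NU: "?N (Eb m) = ?N F0 \<union> (?N F1 \<union> (?N F2 \<union> ?N F3))"
      unfolding U[symmetric] Nb_def by auto
    have fin: "finite (?N (Eb m))" using NE_card(2)[OF m v d] .
    have f: "finite (?N F0)" "finite (?N F1)" "finite (?N F2)" "finite (?N F3)"
      using fin NU by (auto intro: finite_subset)
    have d1: "?N F2 \<inter> ?N F3 = {}" using D(6) unfolding Nb_def by auto
    have d2: "?N F1 \<inter> (?N F2 \<union> ?N F3) = {}" using D(4,5) unfolding Nb_def by auto
    have d3: "?N F0 \<inter> (?N F1 \<union> (?N F2 \<union> ?N F3)) = {}" using D(1,2,3) unfolding Nb_def by auto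
    have "4 = card (?N (Eb m))" using NE_card(1)[OF m v d] by simp
    also have "\<dots> = card (?N F0) + (card (?N F1) + (card (?N F2) + card (?N F3)))"
      unfolding NU using f d1 d2 d3 by (simp add: card_Un_disjoint)
    also have "\<dots> = card (?N F0) + 3"
      using Ncm_card[OF odd m F1 v d] Ncm_card[OF odd m F2 v d] Ncm_card[OF odd m F3 v d] by simp
    finally show ?thesis by simp
  qed
  have v0: "(0,0) \<in> Vb m" using m by (simp add: Vb_eq)
  obtain vs i where vs: "length vs = 4" "distinct vs" "set vs \<subseteq> Vb m" "i < 4" "vs ! i = (0,0)"
     "cycle_edges vs \<subseteq> F0"
    using factor_cycle[OF F0 v0] by blast
  have FE: "F0 \<subseteq> Eb m" using F0 by (simp add: is_cycle_factor_def)
  define P where "P j = (fst (vs!((j+1) mod 4)) = (fst (vs!j)+1) mod m)" for j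
  have st: "fst (vs!((j+1) mod 4)) = (fst (vs!j) + (if P j then 1 else m - 1)) mod m" if "j < 4" for j
    using adj_layers(1)[OF m FE vs(6) vs(1) that] by (auto simp: P_def)
  have ed: "{vs!j, vs!((j+1) mod 4)} \<in> F0" if "j < 4" for j
  proof -
    have "{vs!j, vs!((j+1) mod length vs)} \<in> cycle_edges vs"
      unfolding cycle_edges_def using that vs(1) by auto
    then show ?thesis using vs(1,6) by auto
  qed
  have inV: "vs ! j \<in> Vb m" if "j < 4" for j using vs(1,3) that by auto
  have lt: "fst (vs ! j) < m" if "j < 4" for j using inV[OF that] by (auto simp: Vb_eq)
  have propg: "P j \<longleftrightarrow> P ((j+1) mod 4)" if j: "j < 4" for j
  proof -
    define a where "a = vs ! j"
    define b where "b = vs ! ((j+1) mod 4)"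
    define c where "c = vs ! (((j+1) mod 4 + 1) mod 4)"
    have j1: "(j+1) mod 4 < 4" by simp
    have ac: "a \<noteq> c" unfolding a_def c_def using vs(1,2) j
      by (subst nth_eq_iff_index_eq) (auto simp: mod_Suc)
    have ba: "{b,a} \<in> F0" using ed[OF j] unfolding a_def b_def by (simp add: insert_commute)
    have bc: "{b,c} \<in> F0" using ed[OF j1] unfolding b_def c_def by simp
    have bV: "b \<in> Vb m" unfolding b_def using inV[OF j1] .
    have la: "fst a < m" "fst b < m" using lt[OF j] lt[OF j1] unfolding a_def b_def by auto
    have sa: "fst b = (fst a + (if P j then 1 else m - 1)) mod m" using st[OF j] unfolding a_def b_def .
    have sb: "fst c = (fst b + (if P ((j+1) mod 4) then 1 else m - 1)) mod m"
      using st[OF j1] unfolding b_def c_def .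
    have neq: "(fst b + 1) mod m \<noteq> (fst b + (m-1)) mod m" using fwd_ne_bwd[OF m la(2)] .
    show ?thesis
    proof
      assume p: "P j"
      then have "fst b = (fst a + 1) mod m" using sa by simp
      then have "fst a = (fst b + (m-1)) mod m" using back_iff[OF la(2) la(1)] by simp
      then have aN: "a \<in> Nb m F0 (m-1) b" using ba by (simp add: Nb_def)
      show "P ((j+1) mod 4)"
      proof (rule ccontr)
        assume "\<not> P ((j+1) mod 4)"
        then have "c \<in> Nb m F0 (m-1) b" using sb bc by (simp add: Nb_def)
        then show False using card1_eq[OF c0[OF bV] aN] ac by simp
      qed
    next
      assume p: "P ((j+1) mod 4)"
      then have cN: "c \<in> Nb m F0 1 b" using sb bc by (simp add: Nb_def)
      show "P j"
      proof (rule ccontr)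
        assume "\<not> P j"
        then have "fst b = (fst a + (m-1)) mod m" using sa by simp
        then have "fst a = (fst b + 1) mod m" using back_iff[OF la(1) la(2)] by simp
        then have "a \<in> Nb m F0 1 b" using ba by (simp add: Nb_def)
        then show False using card1_eq[OF c0[OF bV] _ cN] ac by simp
      qed
    qed
  qed
  have "P 0 = P 1" "P 1 = P 2" "P 2 = P 3" "P 3 = P 0" using propg[of 0] propg[of 1] propg[of 2] propg[of 3] by simp_all
  then have S: "{k\<in>{..<4::nat}. P k} = {..<4} \<or> {k\<in>{..<4::nat}. P k} = {}"
  proof -
    have k4: "k = 0 \<or> k = 1 \<or> k = 2 \<or> k = 3" if "k < (4::nat)" for k using that by auto
    then have "\<forall>k<4. P k = P 0" using \<open>P 0 = P 1\<close> \<open>P 1 = P 2\<close> \<open>P 2 = P 3\<close> by metis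
    then show ?thesis by (cases "P 0") auto
  qed
  have W: "int m dvd 2 * int (card {k\<in>{..<4::nat}. P k}) - int 4"
    by (rule walk_count[where L="\<lambda>j. fst (vs!j)", OF _ m st]) auto
  have "int m dvd 4"
    using S
  proof
    assume "{k\<in>{..<4::nat}. P k} = {..<4}"
    then show ?thesis using W by simp
  next
    assume "{k\<in>{..<4::nat}. P k} = {}"
    then have c: "card {k\<in>{..<4::nat}. P k} = 0" by (simp only: card.empty)
    have "int m dvd 2 * int 0 - int 4" using W by (simp only: c)
    then have "int m dvd - 4" by simp
    then show ?thesis by (simp only: dvd_minus_iff)
  qed
  then have "m dvd 4" by (metis of_nat_dvd_iff of_nat_numeral)
  then have "m \<le> 4" by (simp add: dvd_imp_le)
  then have "m = 3 \<or> m = 4" using m by auto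
  then show False using odd \<open>m dvd 4\<close> by auto
qed

theorem mainTheorem5:
  fixes m :: nat
  assumes "odd m" and "3 \<le> m"
  shows "\<not> (\<exists>F0 F1 F2 F3.
            is_cycle_factor (blowup_verts (cycle_graph_verts m) 4)
                            (blowup_edges (cycle_graph_edges m) 4) 4 F0 \<and>
            is_cycle_factor (blowup_verts (cycle_graph_verts m) 4)
                            (blowup_edges (cycle_graph_edges m) 4) m F1 \<and>
            is_cycle_factor (blowup_verts (cycle_graph_verts m) 4)
                            (blowup_edges (cycle_graph_edges m) 4) m F2 \<and>
            is_cycle_factor (blowup_verts (cycle_graph_verts m) 4)
                            (blowup_edges (cycle_graph_edges m) 4) m F3 \<and>
            F0 \<inter> F1 = {} \<and> F0 \<inter> F2 = {} \<and> F0 \<inter> F3 = {} \<and>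
            F1 \<inter> F2 = {} \<and> F1 \<inter> F3 = {} \<and> F2 \<inter> F3 = {} \<and>
            F0 \<union> F1 \<union> F2 \<union> F3 = blowup_edges (cycle_graph_edges m) 4)"
  proof
  assume "\<exists>F0 F1 F2 F3.
            is_cycle_factor (blowup_verts (cycle_graph_verts m) 4)
                            (blowup_edges (cycle_graph_edges m) 4) 4 F0 \<and>
            is_cycle_factor (blowup_verts (cycle_graph_verts m) 4)
                            (blowup_edges (cycle_graph_edges m) 4) m F1 \<and>
            is_cycle_factor (blowup_verts (cycle_graph_verts m) 4)
                            (blowup_edges (cycle_graph_edges m) 4) m F2 \<and>
            is_cycle_factor (blowup_verts (cycle_graph_verts m) 4)
                            (blowup_edges (cycle_graph_edges m) 4) m F3 \<and>
            F0 \<inter> F1 = {} \<and> F0 \<inter> F2 = {} \<and> F0 \<inter> F3 = {} \<and>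
            F1 \<inter> F2 = {} \<and> F1 \<inter> F3 = {} \<and> F2 \<inter> F3 = {} \<and>
            F0 \<union> F1 \<union> F2 \<union> F3 = blowup_edges (cycle_graph_edges m) 4"
  then obtain F0 F1 F2 F3 where
     "is_cycle_factor (Vb m) (Eb m) 4 F0" "is_cycle_factor (Vb m) (Eb m) m F1"
     "is_cycle_factor (Vb m) (Eb m) m F2" "is_cycle_factor (Vb m) (Eb m) m F3"
     "F0 \<inter> F1 = {}" "F0 \<inter> F2 = {}" "F0 \<inter> F3 = {}"
     "F1 \<inter> F2 = {}" "F1 \<inter> F3 = {}" "F2 \<inter> F3 = {}"
     "F0 \<union> F1 \<union> F2 \<union> F3 = Eb m"
    unfolding Vb_def Eb_def by blast
  then show False using main_aux[OF assms] by blast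
qed

end
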